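(* Let $d\ge 1$ be an integer, let $P\subseteq \mathbb R\times[d]$, and let $\mathcal C_{\equiv}(P)$ be as in the context. For any finite family $\mathcal C\subseteq \mathcal C_{\equiv}(P)$, the nerve of $\mathcal C$ is $(2d-1)$-collapsible.
   Context: $[d]=\{1,\dots,d\}$. A (separated) $d$-interval is a set $I=\bigcup_{i\in[d]}\{(x,i)\in\mathbb R\times[d]: x\in I^{(i)}\}$, where each $I^{(i)}\subseteq\mathbb R$ is a convex set (possibly empty), called the $i$-th level of $I$. For $P\subseteq\mathbb R\times[d]$, $\mathcal C_{\equiv}(P)=\{I\cap P: I\subseteq\mathbb R\times[d]\text{ is a } d\text{-interval}\}$. For a family $\mathcal F=(C_i)_{i\in I}$ of sets indexed by a finite set $I$, its nerve is the abstract simplicial complex $K(\mathcal F)=\{J\subseteq I: \bigcap_{j\in J}C_j\neq\emptyset\}$. The dimension of a face $\alpha$ is $|\alpha|-1$. A face $\sigma$ of a simplicial complex $K$ is free if it is contained in a unique inclusion-maximal face of $K$. An elementary $d$-collapse removes from $K$ a free face $\sigma$ with $\dim\sigma\le d-1$ together with all faces containing it, giving $\mathrm{coll}(K,\sigma)=K\setminus\{\tau\in K:\sigma\subseteq\tau\}$. $K$ is $d$-collapsible if it can be reduced to the empty complex by a sequence of elementary $d$-collapses. *)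

theory Defs
  imports "HOL-Analysis.Analysis"
begin

text \<open>Points of R x [d] are pairs (x, i) :: real \<times> nat with level i in {1..d}.\<close>

definition d_interval :: "nat \<Rightarrow> (real \<times> nat) set \<Rightarrow> bool" where
  "d_interval d I \<longleftrightarrow> I \<subseteq> UNIV \<times> {1..d} \<and> (\<forall>i\<in>{1..d}. convex {x. (x, i) \<in> I})"

definition C_equiv :: "nat \<Rightarrow> (real \<times> nat) set \<Rightarrow> (real \<times> nat) set set" where
  "C_equiv d P = {I \<inter> P | I. d_interval d I}"

definition nerve :: "'i set \<Rightarrow> ('i \<Rightarrow> 'a set) \<Rightarrow> 'i set set" where
  "nerve Ix F = {J. J \<subseteq> Ix \<and> (\<Inter>j\<in>J. F j) \<noteq> {}}"

definition maximal_face :: "'a set set \<Rightarrow> 'a set \<Rightarrow> bool" where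
  "maximal_face K \<tau> \<longleftrightarrow> \<tau> \<in> K \<and> (\<forall>\<rho>\<in>K. \<tau> \<subseteq> \<rho> \<longrightarrow> \<rho> = \<tau>)"

definition free_face :: "'a set set \<Rightarrow> 'a set \<Rightarrow> bool" where
  "free_face K \<sigma> \<longleftrightarrow> \<sigma> \<in> K \<and> (\<exists>!\<tau>. maximal_face K \<tau> \<and> \<sigma> \<subseteq> \<tau>)"

definition coll :: "'a set set \<Rightarrow> 'a set \<Rightarrow> 'a set set" where
  "coll K \<sigma> = K - {\<tau> \<in> K. \<sigma> \<subseteq> \<tau>}"

text \<open>d-collapsible: reducible to the empty complex by elementary d-collapses,
  i.e. removals of free faces of dimension \<le> d-1, i.e. of cardinality \<le> d.\<close>
inductive collapsible :: "nat \<Rightarrow> 'a set set \<Rightarrow> bool" for d :: nat where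
  empty: "collapsible d {}"
| step: "\<lbrakk>free_face K \<sigma>; finite \<sigma>; card \<sigma> \<le> d; collapsible d (coll K \<sigma>)\<rbrakk>
           \<Longrightarrow> collapsible d K"

end

theory Submission
  imports Defs "HOL-Analysis.Analysis"
begin

inductive cto :: "nat \<Rightarrow> 'a set set \<Rightarrow> 'a set set \<Rightarrow> bool" for k where
  refl: "cto k K K"
| step: "free_face K \<sigma> \<Longrightarrow> finite \<sigma> \<Longrightarrow> card \<sigma> \<le> k \<Longrightarrow> cto k (coll K \<sigma>) K' \<Longrightarrow> cto k K K'"

lemma cto_collapsible: "cto k K K' \<Longrightarrow> collapsible k K' \<Longrightarrow> collapsible k K"
  by (induction rule: cto.induct) (auto intro: collapsible.step)

lemma cto_trans: "cto k K K' \<Longrightarrow> cto k K' K'' \<Longrightarrow> cto k K K''"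
  by (induction rule: cto.induct) (auto intro: cto.step)

definition Cond :: "'a set list \<Rightarrow> (('a \<Rightarrow> real) \<times> ('a \<Rightarrow> real)) list \<Rightarrow> 'a set \<Rightarrow> bool" where
 "Cond Hs Es \<tau> \<longleftrightarrow> (\<forall>T\<in>set Hs. \<tau> \<inter> T \<noteq> {}) \<and> (\<forall>fg\<in>set Es. \<exists>a\<in>\<tau>. \<exists>b\<in>\<tau>. snd fg b < fst fg a)"

lemma ex_min_on:
  fixes f :: "'a \<Rightarrow> real"
  assumes "finite S" "S \<noteq> {}"
  obtains a where "a \<in> S" "\<And>i. i \<in> S \<Longrightarrow> f a \<le> f i"
proof -
  have "Min (f ` S) \<in> f ` S" using assms by simp
  then obtain a where a: "a \<in> S" "f a = Min (f ` S)" by auto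
  have "f a \<le> f i" if i: "i \<in> S" for i
  proof -
    have "f i \<in> f ` S" using i by simp
    then show ?thesis using a(2) Min_le[OF finite_imageI[OF assms(1)]] by simp
  qed
  then show ?thesis using that a(1) by blast
qed

lemma G:
  assumes "finite \<Delta>" "finite \<sigma>0" "card \<sigma>0 + length Hs + 2 * length Es \<le> k"
    "\<And>\<tau>. (\<tau> \<in> K \<and> \<sigma>0 \<subseteq> \<tau> \<and> Cond Hs Es \<tau>) \<longleftrightarrow> (\<sigma>0 \<subseteq> \<tau> \<and> \<tau> \<subseteq> \<Delta> \<and> Cond Hs Es \<tau>)"
  shows "cto k K (K - {\<tau>\<in>K. \<sigma>0 \<subseteq> \<tau> \<and> Cond Hs Es \<tau>})"
  using assms
proof (induction "(2 * length Es + length Hs) * (card \<Delta> + 1) + card \<Delta>" arbitrary: K \<sigma>0 Hs Es \<Delta> rule: less_induct)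
  case less
  show ?case
  proof (cases Hs)
    case (Cons T Hs0)
    show ?thesis
    proof (cases "T \<inter> \<Delta> = {}")
      case True
      have e0: "{\<tau>\<in>K. \<sigma>0 \<subseteq> \<tau> \<and> Cond Hs Es \<tau>} = {}"
      proof -
        { fix \<tau> assume h: "\<tau> \<in> K" "\<sigma>0 \<subseteq> \<tau>" "Cond Hs Es \<tau>"
          then have "\<tau> \<subseteq> \<Delta>" using less.prems(4)[of \<tau>] by blast
          moreover have "\<tau> \<inter> T \<noteq> {}" using h(3) Cons unfolding Cond_def by simp
          ultimately have False using True by blast }
        then show ?thesis by blast
      qed
      show ?thesis unfolding e0 Diff_empty by (rule cto.refl)
    next
      case False
      then obtain c where c: "c \<in> T" "c \<in> \<Delta>" by blast
      define R1 where "R1 = {\<tau>\<in>K. insert c \<sigma>0 \<subseteq> \<tau> \<and> Cond Hs0 Es \<tau>}"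
      have CH: "\<And>\<tau>. c \<in> \<tau> \<Longrightarrow> Cond Hs0 Es \<tau> \<Longrightarrow> Cond Hs Es \<tau>" using c Cons by (auto simp: Cond_def)
      have CH2: "\<And>\<tau>. Cond Hs Es \<tau> \<Longrightarrow> Cond Hs0 Es \<tau>" using Cons by (auto simp: Cond_def)
      have 1: "cto k K (K - R1)" unfolding R1_def
      proof (rule less.hyps)
        show "(2*length Es + length Hs0)*(card \<Delta>+1) + card \<Delta> < (2*length Es + length Hs)*(card \<Delta>+1) + card \<Delta>" using Cons by simp
        show "finite \<Delta>" by fact
        show "finite (insert c \<sigma>0)" using less.prems(2) by simp
        show "card (insert c \<sigma>0) + length Hs0 + 2*length Es \<le> k" using less.prems(2,3) Cons
          by (simp add: card_insert_if)
        show "\<And>\<tau>. (\<tau> \<in> K \<and> insert c \<sigma>0 \<subseteq> \<tau> \<and> Cond Hs0 Es \<tau>) \<longleftrightarrow> (insert c \<sigma>0 \<subseteq> \<tau> \<and> \<tau> \<subseteq> \<Delta> \<and> Cond Hs0 Es \<tau>)"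
        proof -
          fix \<tau>
          show "(\<tau> \<in> K \<and> insert c \<sigma>0 \<subseteq> \<tau> \<and> Cond Hs0 Es \<tau>) \<longleftrightarrow> (insert c \<sigma>0 \<subseteq> \<tau> \<and> \<tau> \<subseteq> \<Delta> \<and> Cond Hs0 Es \<tau>)"
            using less.prems(4)[of \<tau>] CH[of \<tau>] by blast
        qed
      qed
      define K1 where "K1 = K - R1"
      have 2: "cto k K1 (K1 - {\<tau>\<in>K1. \<sigma>0 \<subseteq> \<tau> \<and> Cond Hs Es \<tau>})"
      proof (rule less.hyps)
        show "(2*length Es + length Hs)*(card (\<Delta> - {c})+1) + card (\<Delta> - {c}) < (2*length Es + length Hs)*(card \<Delta>+1) + card \<Delta>"
          using card_Diff1_less[OF less.prems(1) c(2)] by (intro add_le_less_mono mult_le_mono2) auto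
        show "finite (\<Delta> - {c})" using less.prems(1) by simp
        show "finite \<sigma>0" by fact
        show "card \<sigma>0 + length Hs + 2*length Es \<le> k" by fact
        show "\<And>\<tau>. (\<tau> \<in> K1 \<and> \<sigma>0 \<subseteq> \<tau> \<and> Cond Hs Es \<tau>) \<longleftrightarrow> (\<sigma>0 \<subseteq> \<tau> \<and> \<tau> \<subseteq> \<Delta> - {c} \<and> Cond Hs Es \<tau>)"
        proof -
          fix \<tau>
          show "(\<tau> \<in> K1 \<and> \<sigma>0 \<subseteq> \<tau> \<and> Cond Hs Es \<tau>) \<longleftrightarrow> (\<sigma>0 \<subseteq> \<tau> \<and> \<tau> \<subseteq> \<Delta> - {c} \<and> Cond Hs Es \<tau>)"
            using less.prems(4)[of \<tau>] CH[of \<tau>] CH2[of \<tau>] unfolding K1_def R1_def by blast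
        qed
      qed
      have "K1 - {\<tau>\<in>K1. \<sigma>0 \<subseteq> \<tau> \<and> Cond Hs Es \<tau>} = K - {\<tau>\<in>K. \<sigma>0 \<subseteq> \<tau> \<and> Cond Hs Es \<tau>}"
      proof (rule set_eqI)
        fix \<tau>
        show "\<tau> \<in> K1 - {\<tau>\<in>K1. \<sigma>0 \<subseteq> \<tau> \<and> Cond Hs Es \<tau>} \<longleftrightarrow> \<tau> \<in> K - {\<tau>\<in>K. \<sigma>0 \<subseteq> \<tau> \<and> Cond Hs Es \<tau>}"
          unfolding K1_def R1_def using CH[of \<tau>] by blast
      qed
      then show ?thesis using cto_trans[OF 1] 2 unfolding K1_def by simp
    qed
  next
    case Nil
    show ?thesis
    proof (cases Es)
      case Nil2: Nil
      have CT: "\<And>\<tau>. Cond Hs Es \<tau>" using Nil Nil2 by (simp add: Cond_def)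
      show ?thesis
      proof (cases "\<sigma>0 \<subseteq> \<Delta>")
        case False
        have e0: "{\<tau>\<in>K. \<sigma>0 \<subseteq> \<tau> \<and> Cond Hs Es \<tau>} = {}"
        proof -
          { fix \<tau> assume h: "\<tau> \<in> K" "\<sigma>0 \<subseteq> \<tau>" "Cond Hs Es \<tau>"
            then have "\<tau> \<subseteq> \<Delta>" using less.prems(4)[of \<tau>] by blast
            then have False using h(2) False by blast }
          then show ?thesis by blast
        qed
        show ?thesis unfolding e0 Diff_empty by (rule cto.refl)
      next
        case True
        have s: "\<sigma>0 \<in> K" and D: "\<Delta> \<in> K" using less.prems(4)[of \<sigma>0] less.prems(4)[of \<Delta>] True CT by auto
        have sup: "\<tau> \<subseteq> \<Delta>" if "\<tau> \<in> K" "\<sigma>0 \<subseteq> \<tau>" for \<tau> using less.prems(4)[of \<tau>] CT[of \<tau>] that by blast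
        have mf: "maximal_face K \<Delta>" using D sup True unfolding maximal_face_def by blast
        have ff: "free_face K \<sigma>0" unfolding free_face_def
        proof (rule conjI)
          show "\<sigma>0 \<in> K" by fact
          show "\<exists>!\<tau>. maximal_face K \<tau> \<and> \<sigma>0 \<subseteq> \<tau>"
          proof (rule ex1I[of _ \<Delta>])
            show "maximal_face K \<Delta> \<and> \<sigma>0 \<subseteq> \<Delta>" using mf True by blast
            show "\<And>\<tau>. maximal_face K \<tau> \<and> \<sigma>0 \<subseteq> \<tau> \<Longrightarrow> \<tau> = \<Delta>"
              using sup D unfolding maximal_face_def by blast
          qed
        qed
        have "coll K \<sigma>0 = K - {\<tau>\<in>K. \<sigma>0 \<subseteq> \<tau> \<and> Cond Hs Es \<tau>}" unfolding coll_def using CT by blast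
        then show ?thesis using cto.step[OF ff less.prems(2) _ cto.refl] less.prems(3) by simp
      qed
    next
      case (Cons fg Es0)
      show ?thesis
      proof (cases "\<Delta> = {}")
        case True
        have e0: "{\<tau>\<in>K. \<sigma>0 \<subseteq> \<tau> \<and> Cond Hs Es \<tau>} = {}"
        proof -
          { fix \<tau> assume h: "\<tau> \<in> K" "\<sigma>0 \<subseteq> \<tau>" "Cond Hs Es \<tau>"
            then have "\<tau> \<subseteq> \<Delta>" using less.prems(4)[of \<tau>] by blast
            moreover have "\<exists>a\<in>\<tau>. \<exists>b\<in>\<tau>. snd fg b < fst fg a" using h(3) Cons unfolding Cond_def by simp
            ultimately have False using True by blast }
          then show ?thesis by blast
        qed
        show ?thesis unfolding e0 Diff_empty by (rule cto.refl)
      next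
        case False
        obtain c where c: "c \<in> \<Delta>" "\<And>b. b \<in> \<Delta> \<Longrightarrow> snd fg c \<le> snd fg b"
          using ex_min_on[OF less.prems(1) False, of "snd fg"] by blast
        define T where "T = {a. snd fg c < fst fg a}"
        define R1 where "R1 = {\<tau>\<in>K. insert c \<sigma>0 \<subseteq> \<tau> \<and> Cond (T # Hs) Es0 \<tau>}"
        have CH: "\<And>\<tau>. c \<in> \<tau> \<Longrightarrow> Cond (T # Hs) Es0 \<tau> \<Longrightarrow> Cond Hs Es \<tau>"
          using Cons unfolding Cond_def T_def by auto
        have CH3: "\<And>\<tau>. \<tau> \<subseteq> \<Delta> \<Longrightarrow> c \<in> \<tau> \<Longrightarrow> Cond Hs Es \<tau> \<Longrightarrow> Cond (T # Hs) Es0 \<tau>"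
        proof -
          fix \<tau> assume h: "\<tau> \<subseteq> \<Delta>" "c \<in> \<tau>" "Cond Hs Es \<tau>"
          then obtain a b where ab: "a \<in> \<tau>" "b \<in> \<tau>" "snd fg b < fst fg a" using Cons unfolding Cond_def by auto
          have "snd fg c \<le> snd fg b" using c(2) h(1) ab(2) by blast
          then have "a \<in> \<tau> \<inter> T" using ab unfolding T_def by auto
          then show "Cond (T # Hs) Es0 \<tau>" using h(3) Cons unfolding Cond_def by auto
        qed
        have 1: "cto k K (K - R1)" unfolding R1_def
        proof (rule less.hyps)
          show "(2*length Es0 + length (T#Hs))*(card \<Delta>+1) + card \<Delta> < (2*length Es + length Hs)*(card \<Delta>+1) + card \<Delta>" using Cons by simp
          show "finite \<Delta>" by fact
          show "finite (insert c \<sigma>0)" using less.prems(2) by simp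
          show "card (insert c \<sigma>0) + length (T#Hs) + 2*length Es0 \<le> k" using less.prems(2,3) Cons
            by (simp add: card_insert_if)
          show "\<And>\<tau>. (\<tau> \<in> K \<and> insert c \<sigma>0 \<subseteq> \<tau> \<and> Cond (T#Hs) Es0 \<tau>) \<longleftrightarrow> (insert c \<sigma>0 \<subseteq> \<tau> \<and> \<tau> \<subseteq> \<Delta> \<and> Cond (T#Hs) Es0 \<tau>)"
          proof -
            fix \<tau>
            show "(\<tau> \<in> K \<and> insert c \<sigma>0 \<subseteq> \<tau> \<and> Cond (T#Hs) Es0 \<tau>) \<longleftrightarrow> (insert c \<sigma>0 \<subseteq> \<tau> \<and> \<tau> \<subseteq> \<Delta> \<and> Cond (T#Hs) Es0 \<tau>)"
              using less.prems(4)[of \<tau>] CH[of \<tau>] by blast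
          qed
        qed
        define K1 where "K1 = K - R1"
        have 2: "cto k K1 (K1 - {\<tau>\<in>K1. \<sigma>0 \<subseteq> \<tau> \<and> Cond Hs Es \<tau>})"
        proof (rule less.hyps)
          show "(2*length Es + length Hs)*(card (\<Delta> - {c})+1) + card (\<Delta> - {c}) < (2*length Es + length Hs)*(card \<Delta>+1) + card \<Delta>"
            using card_Diff1_less[OF less.prems(1) c(1)] by (intro add_le_less_mono mult_le_mono2) auto
          show "finite (\<Delta> - {c})" using less.prems(1) by simp
          show "finite \<sigma>0" by fact
          show "card \<sigma>0 + length Hs + 2*length Es \<le> k" by fact
          show "\<And>\<tau>. (\<tau> \<in> K1 \<and> \<sigma>0 \<subseteq> \<tau> \<and> Cond Hs Es \<tau>) \<longleftrightarrow> (\<sigma>0 \<subseteq> \<tau> \<and> \<tau> \<subseteq> \<Delta> - {c} \<and> Cond Hs Es \<tau>)"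
          proof -
            fix \<tau>
            show "(\<tau> \<in> K1 \<and> \<sigma>0 \<subseteq> \<tau> \<and> Cond Hs Es \<tau>) \<longleftrightarrow> (\<sigma>0 \<subseteq> \<tau> \<and> \<tau> \<subseteq> \<Delta> - {c} \<and> Cond Hs Es \<tau>)"
              using less.prems(4)[of \<tau>] CH[of \<tau>] CH3[of \<tau>] unfolding K1_def R1_def by blast
          qed
        qed
        have "K1 - {\<tau>\<in>K1. \<sigma>0 \<subseteq> \<tau> \<and> Cond Hs Es \<tau>} = K - {\<tau>\<in>K. \<sigma>0 \<subseteq> \<tau> \<and> Cond Hs Es \<tau>}"
        proof (rule set_eqI)
          fix \<tau>
          show "\<tau> \<in> K1 - {\<tau>\<in>K1. \<sigma>0 \<subseteq> \<tau> \<and> Cond Hs Es \<tau>} \<longleftrightarrow> \<tau> \<in> K - {\<tau>\<in>K. \<sigma>0 \<subseteq> \<tau> \<and> Cond Hs Es \<tau>}"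
            unfolding K1_def R1_def using CH[of \<tau>] by blast
        qed
        then show ?thesis using cto_trans[OF 1] 2 unfolding K1_def by simp
      qed
    qed
  qed
qed

definition lv :: "nat \<Rightarrow> (real \<times> nat) set \<Rightarrow> real set" where
  "lv l S = {x. (x, l) \<in> S}"
definition lft :: "nat \<Rightarrow> (real \<times> nat) set \<Rightarrow> real" where
  "lft l S = (if lv l S = {} then 1 else Min (lv l S))"
definition rgt :: "nat \<Rightarrow> (real \<times> nat) set \<Rightarrow> real" where
  "rgt l S = (if lv l S = {} then 0 else Max (lv l S))"
definition ordconv :: "(real \<times> nat) set \<Rightarrow> (real \<times> nat) set \<Rightarrow> bool" where
  "ordconv P S \<longleftrightarrow> S \<subseteq> P \<and> (\<forall>x y z l. (x,l) \<in> S \<longrightarrow> (z,l) \<in> S \<longrightarrow> (y,l) \<in> P \<longrightarrow> x \<le> y \<longrightarrow> y \<le> z \<longrightarrow> (y,l) \<in> S)"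

lemma ordconvD:
  assumes "ordconv P S" "(x,l)\<in>S" "(z,l)\<in>S" "(y,l)\<in>P" "x\<le>y" "y\<le>z"
  shows "(y,l)\<in>S"
proof -
  have "\<forall>x y z l. (x,l) \<in> S \<longrightarrow> (z,l) \<in> S \<longrightarrow> (y,l) \<in> P \<longrightarrow> x \<le> y \<longrightarrow> y \<le> z \<longrightarrow> (y,l) \<in> S"
    using assms(1) unfolding ordconv_def by (rule conjunct2)
  then have "(x,l) \<in> S \<longrightarrow> (z,l) \<in> S \<longrightarrow> (y,l) \<in> P \<longrightarrow> x \<le> y \<longrightarrow> y \<le> z \<longrightarrow> (y,l) \<in> S"
    by (elim allE)
  then show ?thesis using assms(2-6) by (elim impE)
qed

lemma ordconvP: "ordconv P S \<Longrightarrow> S \<subseteq> P"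
  unfolding ordconv_def by (rule conjunct1)

lemma finite_lv: "finite S \<Longrightarrow> finite (lv l S)"
proof -
  assume "finite S"
  moreover have "lv l S \<subseteq> fst ` S"
  proof
    fix x assume "x \<in> lv l S"
    then have "(x,l) \<in> S" by (simp add: lv_def)
    then show "x \<in> fst ` S" by (rule image_eqI[rotated]) simp
  qed
  ultimately show ?thesis by (meson finite_imageI finite_subset)
qed

lemma ordconv_remove_min:
  assumes "ordconv P S" "\<And>x. (x, j) \<in> S \<Longrightarrow> x0 \<le> x"
  shows "ordconv P (S - {(x0, j)})"
proof -
  have S: "S \<subseteq> P" and c: "\<And>x y z l. (x,l)\<in>S \<Longrightarrow> (z,l)\<in>S \<Longrightarrow> (y,l)\<in>P \<Longrightarrow> x\<le>y \<Longrightarrow> y\<le>z \<Longrightarrow> (y,l)\<in>S"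
    by (rule ordconvP[OF assms(1)], rule ordconvD[OF assms(1)])
  show ?thesis unfolding ordconv_def
  proof (intro conjI allI impI)
    show "S - {(x0,j)} \<subseteq> P" using S by blast
    fix x y z l assume h: "(x,l) \<in> S - {(x0,j)}" "(z,l) \<in> S - {(x0,j)}" "(y,l)\<in>P" "x\<le>y" "y\<le>z"
    have "(y,l) \<in> S" using c h by blast
    moreover have "(y,l) \<noteq> (x0,j)"
    proof
      assume e: "(y,l) = (x0,j)"
      then have "x0 \<le> x" using assms(2) h(1) by auto
      then have "x = x0" using h(4) e by simp
      then show False using h(1) e by simp
    qed
    ultimately show "(y,l) \<in> S - {(x0,j)}" by blast
  qed
qed

lemma ex_max_on:
  fixes f :: "'a \<Rightarrow> real"
  assumes "finite S" "S \<noteq> {}"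
  obtains a where "a \<in> S" "\<And>i. i \<in> S \<Longrightarrow> f i \<le> f a"
proof -
  have "Max (f ` S) \<in> f ` S" using assms by simp
  then obtain a where a: "a \<in> S" "f a = Max (f ` S)" by auto
  have "f i \<le> f a" if i: "i \<in> S" for i
  proof -
    have "f i \<in> f ` S" using i by simp
    then show ?thesis using a(2) Max_ge[OF finite_imageI[OF assms(1)]] by simp
  qed
  then show ?thesis using that a(1) by blast
qed

lemma lvl_empty_iff:
  assumes "finite P" "finite \<tau>" "\<tau> \<noteq> {}" "\<And>i. i \<in> \<tau> \<Longrightarrow> ordconv P (F i)"
  shows "(\<Inter>i\<in>\<tau>. lv l (F i)) = {} \<longleftrightarrow> (\<exists>a\<in>\<tau>. \<exists>b\<in>\<tau>. rgt l (F b) < lft l (F a))"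
proof
  have fin: "\<And>i. i \<in> \<tau> \<Longrightarrow> finite (lv l (F i))"
  proof -
    fix i assume "i \<in> \<tau>"
    then have "F i \<subseteq> P" by (rule ordconvP[OF assms(4)])
    then have "finite (F i)" using assms(1) by (rule finite_subset)
    then show "finite (lv l (F i))" by (rule finite_lv)
  qed
  assume E: "(\<Inter>i\<in>\<tau>. lv l (F i)) = {}"
  show "\<exists>a\<in>\<tau>. \<exists>b\<in>\<tau>. rgt l (F b) < lft l (F a)"
  proof (rule ccontr)
    assume nt: "\<not> ?thesis"
    have le: "lft l (F a) \<le> rgt l (F b)" if "a \<in> \<tau>" "b \<in> \<tau>" for a b
    proof -
      have "\<not> rgt l (F b) < lft l (F a)" using nt that by blast
      then show ?thesis by simp
    qed
    have ne: "lv l (F a) \<noteq> {}" if a: "a \<in> \<tau>" for a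
    proof -
      have "lft l (F a) \<le> rgt l (F a)" using le a by blast
      then show ?thesis unfolding lft_def rgt_def by auto
    qed
    obtain a0 where a0: "a0 \<in> \<tau>" "\<And>a. a \<in> \<tau> \<Longrightarrow> lft l (F a) \<le> lft l (F a0)"
      using ex_max_on[OF assms(2,3), of "\<lambda>a. lft l (F a)"] by blast
    define y where "y = lft l (F a0)"
    have y0: "y \<in> lv l (F a0)" using ne[OF a0(1)] fin[OF a0(1)] unfolding y_def lft_def by simp
    have yP: "(y, l) \<in> P" using y0 ordconvP[OF assms(4)[OF a0(1)]] unfolding lv_def by auto
    have "y \<in> (\<Inter>i\<in>\<tau>. lv l (F i))"
    proof
      fix C assume C: "C \<in> \<tau>"
      have lC: "lft l (F C) = Min (lv l (F C))" using ne[OF C] unfolding lft_def by simp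
      have rC: "rgt l (F C) = Max (lv l (F C))" using ne[OF C] unfolding rgt_def by simp
      have "lft l (F C) \<in> lv l (F C)" unfolding lC by (rule Min_in[OF fin[OF C] ne[OF C]])
      then have m1: "(lft l (F C), l) \<in> F C" unfolding lv_def by simp
      have "rgt l (F C) \<in> lv l (F C)" unfolding rC by (rule Max_in[OF fin[OF C] ne[OF C]])
      then have m2: "(rgt l (F C), l) \<in> F C" unfolding lv_def by simp
      have "lft l (F C) \<le> y" "y \<le> rgt l (F C)" using a0 C le unfolding y_def by auto
      then have "(y, l) \<in> F C" using ordconvD[OF assms(4)[OF C] m1 m2 yP] by blast
      then show "y \<in> lv l (F C)" unfolding lv_def by simp
    qed
    then show False using E by blast
  qed
next
  have fin: "\<And>i. i \<in> \<tau> \<Longrightarrow> finite (lv l (F i))"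
  proof -
    fix i assume "i \<in> \<tau>"
    then have "F i \<subseteq> P" by (rule ordconvP[OF assms(4)])
    then have "finite (F i)" using assms(1) by (rule finite_subset)
    then show "finite (lv l (F i))" by (rule finite_lv)
  qed
  assume "\<exists>a\<in>\<tau>. \<exists>b\<in>\<tau>. rgt l (F b) < lft l (F a)"
  then obtain a b where ab: "a \<in> \<tau>" "b \<in> \<tau>" "rgt l (F b) < lft l (F a)" by blast
  show "(\<Inter>i\<in>\<tau>. lv l (F i)) = {}"
  proof (rule ccontr)
    assume "\<not> ?thesis"
    then obtain y where y: "\<And>i. i \<in> \<tau> \<Longrightarrow> y \<in> lv l (F i)" by blast
    have "lft l (F a) \<le> y" using y[OF ab(1)] fin[OF ab(1)] unfolding lft_def by auto
    moreover have "y \<le> rgt l (F b)" using y[OF ab(2)] fin[OF ab(2)] unfolding rgt_def by auto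
    ultimately show False using ab(3) by simp
  qed
qed

lemma nerve_all_empty:
  assumes "\<forall>i\<in>Ix. F i = {}"
  shows "nerve Ix F = {{}}"
  using assms unfolding nerve_def by auto

lemma collapsible_single: "collapsible k {{}}"
proof (rule collapsible.step[of "{{}}" "{}"])
  show "free_face {{}} {}" unfolding free_face_def maximal_face_def by auto
  show "collapsible k (coll {{}} {})" unfolding coll_def by (simp add: collapsible.empty)
qed auto

lemma inter_upd:
  assumes "A \<in> J"
  shows "(\<Inter>i\<in>J. (F(A := F A - {q})) i) = (\<Inter>i\<in>J. F i) - {q}"
  using assms by (auto split: if_splits)

lemma inter_upd2:
  assumes "A \<notin> J"
  shows "(\<Inter>i\<in>J. (F(A := X)) i) = (\<Inter>i\<in>J. F i)"
  using assms by (auto split: if_splits)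

lemma len_filter: "j \<in> {1..d} \<Longrightarrow> length (filter (\<lambda>l. l \<noteq> j) [1..<d+1]) = d - 1"
proof -
  assume j: "j \<in> {1..d}"
  have "length (filter (\<lambda>l. l \<noteq> j) [1..<d+1]) = card ({l. l \<noteq> j} \<inter> set [1..<d+1])"
    by (rule distinct_length_filter) simp
  also have "{l. l \<noteq> j} \<inter> set [1..<d+1] = {1..d} - {j}" by auto
  also have "card ({1..d} - {j}) = d - 1" using j by simp
  finally show ?thesis .
qed

lemma comb:
  fixes P :: "(real \<times> nat) set" and F :: "'i \<Rightarrow> (real \<times> nat) set"
  assumes d: "d \<ge> 1" and finP: "finite P" and Pd: "P \<subseteq> UNIV \<times> {1..d}"
  shows "finite Ix \<Longrightarrow> (\<forall>i\<in>Ix. ordconv P (F i)) \<Longrightarrow> collapsible (2*d-1) (nerve Ix F)"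
proof (induction "\<Sum>i\<in>Ix. card (F i)" arbitrary: F rule: less_induct)
  case less
  note finIx = less.prems(1)
  have oc: "\<And>i. i \<in> Ix \<Longrightarrow> ordconv P (F i)" using less.prems(2) by blast
  have FP: "\<And>i. i \<in> Ix \<Longrightarrow> F i \<subseteq> P" using oc ordconvP by blast
  have finF: "\<And>i. i \<in> Ix \<Longrightarrow> finite (F i)" using FP finP finite_subset by blast
  show ?case
  proof (cases "\<forall>i\<in>Ix. F i = {}")
    case True
    then show ?thesis using nerve_all_empty collapsible_single by metis
  next
    case False
    then obtain i0 p where i0: "i0 \<in> Ix" "p \<in> F i0" by blast
    define j where "j = snd p"
    have jd: "j \<in> {1..d}" using i0 FP Pd unfolding j_def by force
    define S where "S = {i\<in>Ix. lv j (F i) \<noteq> {}}"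
    have "fst p \<in> lv j (F i0)" using i0 unfolding lv_def j_def by simp
    then have "i0 \<in> S" using i0 unfolding S_def by blast
    moreover have "finite S" using finIx unfolding S_def by simp
    ultimately obtain A where A: "A \<in> S" "\<And>i. i \<in> S \<Longrightarrow> rgt j (F A) \<le> rgt j (F i)"
      using ex_min_on[of S "\<lambda>i. rgt j (F i)"] by blast
    have AIx: "A \<in> Ix" using A unfolding S_def by blast
    define X where "X = lv j (F A)"
    have Xne: "X \<noteq> {}" and Xfin: "finite X" using A finF[OF AIx] finite_lv unfolding S_def X_def by auto
    define x0 where "x0 = Min X"
    define r where "r = Max X"
    have x0X: "x0 \<in> X" and rX: "r \<in> X" using Xne Xfin Min_in Max_in unfolding x0_def r_def by auto
    have x0r: "x0 \<le> r" using Xne Xfin unfolding x0_def r_def by simp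
    define q where "q = (x0, j)"
    have qA: "q \<in> F A" using x0X unfolding q_def X_def lv_def by simp
    have rA: "(r, j) \<in> F A" using rX unfolding X_def lv_def by simp
    have rgtA: "rgt j (F A) = r" using Xne unfolding rgt_def r_def X_def by simp
    define F' where "F' = F(A := F A - {q})"
    have oc': "\<forall>i\<in>Ix. ordconv P (F' i)"
    proof
      fix i assume i: "i \<in> Ix"
      show "ordconv P (F' i)"
      proof (cases "i = A")
        case True
        have "\<And>x. (x, j) \<in> F A \<Longrightarrow> x0 \<le> x" using Xfin unfolding x0_def X_def lv_def by simp
        then show ?thesis using True ordconv_remove_min[OF oc[OF AIx]] unfolding F'_def q_def by simp
      qed (use oc[OF i] F'_def in simp)
    qed
    have lessm: "(\<Sum>i\<in>Ix. card (F' i)) < (\<Sum>i\<in>Ix. card (F i))"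
    proof (rule sum_strict_mono_ex1[OF finIx])
      show "\<forall>i\<in>Ix. card (F' i) \<le> card (F i)"
        unfolding F'_def using finF by (simp add: card_mono)
      show "\<exists>i\<in>Ix. card (F' i) < card (F i)"
      proof
        show "card (F' A) < card (F A)" unfolding F'_def using card_Diff1_less[OF finF[OF AIx] qA] by simp
      qed (rule AIx)
    qed
    have IH: "collapsible (2*d-1) (nerve Ix F')"
      using less.hyps[OF lessm finIx oc'] .
    show ?thesis
    proof (cases "x0 < r")
      case True
      have key: "((\<Inter>i\<in>J. F' i) \<noteq> {}) = ((\<Inter>i\<in>J. F i) \<noteq> {})" if J: "J \<subseteq> Ix" for J
        proof (cases "A \<in> J")
          case False
          then show ?thesis using inter_upd2[of A J F "F A - {q}"] unfolding F'_def by simp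
        next
          case AJ: True
          have eq: "(\<Inter>i\<in>J. F' i) = (\<Inter>i\<in>J. F i) - {q}" unfolding F'_def using inter_upd[OF AJ, of F q] by simp
          have "(\<Inter>i\<in>J. F i) - {q} \<noteq> {}" if ne: "(\<Inter>i\<in>J. F i) \<noteq> {}"
          proof (cases "q \<in> (\<Inter>i\<in>J. F i)")
            case False then show ?thesis using ne by blast
          next
            case qin: True
            have "(r, j) \<in> (\<Inter>i\<in>J. F i)"
            proof
              fix C assume C: "C \<in> J"
              have CIx: "C \<in> Ix" using C J by blast
              have qC: "(x0, j) \<in> F C" using qin C unfolding q_def by blast
              have CS: "C \<in> S" using qC CIx unfolding S_def lv_def by blast
              have "r \<le> rgt j (F C)" using A(2)[OF CS] rgtA by simp
              moreover have ne': "lv j (F C) \<noteq> {}" using CS unfolding S_def by blast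
              moreover have "finite (lv j (F C))" using finF[OF CIx] finite_lv by blast
              ultimately have "Max (lv j (F C)) \<in> lv j (F C)" "rgt j (F C) = Max (lv j (F C))" "r \<le> rgt j (F C)"
                using Max_in unfolding rgt_def by auto
              then have "(rgt j (F C), j) \<in> F C" "r \<le> rgt j (F C)" unfolding lv_def by auto
              moreover have "(r, j) \<in> P" using rA FP[OF AIx] by blast
              ultimately show "(r, j) \<in> F C" using ordconvD[OF oc[OF CIx] qC, of "rgt j (F C)" r] x0r by blast
            qed
            moreover have "(r, j) \<noteq> q" using True unfolding q_def by simp
            ultimately show ?thesis by blast
          qed
          then show ?thesis using eq by blast
        qed
      have "J \<in> nerve Ix F' \<longleftrightarrow> J \<in> nerve Ix F" for J
      proof
        assume a: "J \<in> nerve Ix F'"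
        then have J: "J \<subseteq> Ix" and x: "(\<Inter>i\<in>J. F' i) \<noteq> {}" unfolding nerve_def mem_Collect_eq by (rule conjunct1, rule conjunct2)
        have "(\<Inter>i\<in>J. F i) \<noteq> {}" using iffD1[OF key[OF J] x] .
        then show "J \<in> nerve Ix F" using J unfolding nerve_def mem_Collect_eq by (rule conjI[rotated])
      next
        assume a: "J \<in> nerve Ix F"
        then have J: "J \<subseteq> Ix" and x: "(\<Inter>i\<in>J. F i) \<noteq> {}" unfolding nerve_def mem_Collect_eq by (rule conjunct1, rule conjunct2)
        have "(\<Inter>i\<in>J. F' i) \<noteq> {}" using iffD2[OF key[OF J] x] .
        then show "J \<in> nerve Ix F'" using J unfolding nerve_def mem_Collect_eq by (rule conjI[rotated])
      qed
      then have "nerve Ix F' = nerve Ix F" by (rule set_eqI)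
      then show ?thesis using IH by simp
    next
      case False
      have yx: "y = x0" if "y \<in> X" for y
      proof -
        have "x0 \<le> y" "y \<le> r" using that Xfin unfolding x0_def r_def by auto
        then show ?thesis using False by linarith
      qed
      then have Xs: "X = {x0}" using x0X by blast
      define Ls where "Ls = filter (\<lambda>l. l \<noteq> j) [1..<d+1]"
      define Es where "Es = map (\<lambda>l. (\<lambda>i. lft l (F i), \<lambda>i. rgt l (F i))) Ls"
      define K where "K = nerve Ix F"
      define \<Delta> where "\<Delta> = {i\<in>Ix. q \<in> F i}"
      have setLs: "set Ls = {1..d} - {j}" unfolding Ls_def by auto
      have E: "Cond [] Es J \<longleftrightarrow> (\<forall>l\<in>{1..d} - {j}. (\<Inter>i\<in>J. lv l (F i)) = {})"
        if J: "J \<subseteq> Ix" "A \<in> J" for J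
      proof -
        have "Cond [] Es J \<longleftrightarrow> (\<forall>l\<in>set Ls. \<exists>a\<in>J. \<exists>b\<in>J. rgt l (F b) < lft l (F a))"
          unfolding Cond_def Es_def by auto
        also have "\<dots> \<longleftrightarrow> (\<forall>l\<in>set Ls. (\<Inter>i\<in>J. lv l (F i)) = {})"
        proof -
          have fJ: "finite J" using J finIx finite_subset by blast
          have nJ: "J \<noteq> {}" using J by blast
          have oJ: "\<And>i. i \<in> J \<Longrightarrow> ordconv P (F i)" using J oc by blast
          show ?thesis using lvl_empty_iff[OF finP fJ nJ, of F] oJ by simp
        qed
        finally show ?thesis using setLs by simp
      qed
      have Z: "(\<Inter>i\<in>J. F i) - {q} \<noteq> {} \<longleftrightarrow> \<not> (\<forall>l\<in>{1..d} - {j}. (\<Inter>i\<in>J. lv l (F i)) = {})"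
        if J: "J \<subseteq> Ix" "A \<in> J" for J
      proof
        assume "(\<Inter>i\<in>J. F i) - {q} \<noteq> {}"
        then obtain x l where xl: "(x, l) \<in> (\<Inter>i\<in>J. F i)" "(x, l) \<noteq> q" by auto
        have xlA: "(x, l) \<in> F A" using xl J by blast
        then have "l \<in> {1..d}" using FP[OF AIx] Pd by blast
        moreover have "l \<noteq> j"
        proof
          assume "l = j"
          then have "x \<in> X" using xlA unfolding X_def lv_def by simp
          then show False using Xs xl(2) \<open>l = j\<close> unfolding q_def by simp
        qed
        moreover have "x \<in> (\<Inter>i\<in>J. lv l (F i))" using xl unfolding lv_def by blast
        ultimately show "\<not> (\<forall>l\<in>{1..d} - {j}. (\<Inter>i\<in>J. lv l (F i)) = {})" by blast
      next
        assume "\<not> (\<forall>l\<in>{1..d} - {j}. (\<Inter>i\<in>J. lv l (F i)) = {})"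
        then obtain l x where "l \<in> {1..d}" "l \<noteq> j" "x \<in> (\<Inter>i\<in>J. lv l (F i))" by blast
        then have "(x, l) \<in> (\<Inter>i\<in>J. F i)" "(x, l) \<noteq> q" unfolding lv_def q_def by auto
        then show "(\<Inter>i\<in>J. F i) - {q} \<noteq> {}" by blast
      qed
      have cto: "cto (2*d-1) K (K - {\<tau>\<in>K. {A} \<subseteq> \<tau> \<and> Cond [] Es \<tau>})"
      proof (rule G)
        show "finite \<Delta>" using finIx unfolding \<Delta>_def by simp
        show "finite {A}" by simp
        have "length Es = d - 1" unfolding Es_def Ls_def using len_filter[OF jd] by simp
        then show "card {A} + length [] + 2 * length Es \<le> 2*d-1" using d by simp
        fix \<tau>
        show "(\<tau> \<in> K \<and> {A} \<subseteq> \<tau> \<and> Cond [] Es \<tau>) \<longleftrightarrow> ({A} \<subseteq> \<tau> \<and> \<tau> \<subseteq> \<Delta> \<and> Cond [] Es \<tau>)"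
        proof
          assume h: "\<tau> \<in> K \<and> {A} \<subseteq> \<tau> \<and> Cond [] Es \<tau>"
          then have t: "\<tau> \<subseteq> Ix" "(\<Inter>i\<in>\<tau>. F i) \<noteq> {}" "A \<in> \<tau>" unfolding K_def nerve_def by auto
          have cc: "Cond [] Es \<tau>" using h by (rule conjunct2[OF conjunct2])
          have Q: "\<forall>l\<in>{1..d} - {j}. (\<Inter>i\<in>\<tau>. lv l (F i)) = {}" by (rule iffD1[OF E[OF t(1,3)] cc])
          have "(\<Inter>i\<in>\<tau>. F i) - {q} = {}"
          proof (rule ccontr)
            assume x: "(\<Inter>i\<in>\<tau>. F i) - {q} \<noteq> {}"
            have "\<not> (\<forall>l\<in>{1..d} - {j}. (\<Inter>i\<in>\<tau>. lv l (F i)) = {})" by (rule iffD1[OF Z[OF t(1,3)] x])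
            then show False using Q by (rule notE)
          qed
          then have "q \<in> (\<Inter>i\<in>\<tau>. F i)" using t(2) by blast
          then show "{A} \<subseteq> \<tau> \<and> \<tau> \<subseteq> \<Delta> \<and> Cond [] Es \<tau>" using h t unfolding \<Delta>_def by blast
        next
          assume h: "{A} \<subseteq> \<tau> \<and> \<tau> \<subseteq> \<Delta> \<and> Cond [] Es \<tau>"
          then have "q \<in> (\<Inter>i\<in>\<tau>. F i)" "\<tau> \<subseteq> Ix" unfolding \<Delta>_def by auto
          then show "\<tau> \<in> K \<and> {A} \<subseteq> \<tau> \<and> Cond [] Es \<tau>" using h unfolding K_def nerve_def by blast
        qed
      qed
      have "nerve Ix F' = K - {\<tau>\<in>K. {A} \<subseteq> \<tau> \<and> Cond [] Es \<tau>}"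
      proof (rule set_eqI)
        fix J
        show "J \<in> nerve Ix F' \<longleftrightarrow> J \<in> K - {\<tau>\<in>K. {A} \<subseteq> \<tau> \<and> Cond [] Es \<tau>}"
        proof (cases "A \<in> J \<and> J \<subseteq> Ix")
          case False
          then show ?thesis unfolding K_def nerve_def F'_def using inter_upd2[of A J F] by auto
        next
          case True
          have eq: "(\<Inter>i\<in>J. F' i) = (\<Inter>i\<in>J. F i) - {q}" unfolding F'_def using inter_upd[of A J F q] True by simp
          have J1: "J \<subseteq> Ix" and J2: "A \<in> J" using True by auto
          have e1: "J \<in> nerve Ix F' \<longleftrightarrow> (\<Inter>i\<in>J. F i) - {q} \<noteq> {}" using J1 eq unfolding nerve_def by simp
          have e2a: "J \<in> K - {\<tau>\<in>K. {A} \<subseteq> \<tau> \<and> Cond [] Es \<tau>} \<longleftrightarrow> J \<in> K \<and> \<not> Cond [] Es J"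
            using J2 by blast
          have e2b: "J \<in> K \<longleftrightarrow> (\<Inter>i\<in>J. F i) \<noteq> {}" using J1 unfolding K_def nerve_def mem_Collect_eq by blast
          have e3: "\<not> Cond [] Es J \<longleftrightarrow> (\<Inter>i\<in>J. F i) - {q} \<noteq> {}"
            by (subst E[OF J1 J2]) (rule Z[OF J1 J2, symmetric])
          have e4: "(\<Inter>i\<in>J. F i) - {q} \<noteq> {} \<Longrightarrow> (\<Inter>i\<in>J. F i) \<noteq> {}" by blast
          show ?thesis
          proof
            assume a: "J \<in> nerve Ix F'"
            have x: "(\<Inter>i\<in>J. F i) - {q} \<noteq> {}" by (rule iffD1[OF e1 a])
            have nc: "\<not> Cond [] Es J" by (rule iffD2[OF e3 x])
            have k: "J \<in> K" by (rule iffD2[OF e2b e4[OF x]])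
            show "J \<in> K - {\<tau>\<in>K. {A} \<subseteq> \<tau> \<and> Cond [] Es \<tau>}" by (rule iffD2[OF e2a conjI[OF k nc]])
          next
            assume b: "J \<in> K - {\<tau>\<in>K. {A} \<subseteq> \<tau> \<and> Cond [] Es \<tau>}"
            have "\<not> Cond [] Es J" using iffD1[OF e2a b] by (rule conjunct2)
            then have x: "(\<Inter>i\<in>J. F i) - {q} \<noteq> {}" by (rule iffD1[OF e3])
            show "J \<in> nerve Ix F'" by (rule iffD2[OF e1 x])
          qed
        qed
      qed
      then show ?thesis using cto_collapsible[OF cto] IH unfolding K_def by simp
    qed
  qed
qed

lemma Cequiv_ordconv:
  assumes "P \<subseteq> UNIV \<times> {1..d}" "C \<in> C_equiv d P"
  shows "ordconv P C"
proof -
  obtain I where I: "C = I \<inter> P" "d_interval d I" using assms(2) unfolding C_equiv_def by blast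
  show ?thesis unfolding ordconv_def
  proof (intro conjI allI impI)
    show "C \<subseteq> P" using I by blast
    fix x y z l assume h: "(x,l)\<in>C" "(z,l)\<in>C" "(y,l)\<in>P" "x\<le>y" "y\<le>z"
    have l: "l \<in> {1..d}" using h(3) assms(1) by blast
    define S where "S = {x. (x,l) \<in> I}"
    have cv: "convex S" using I(2) l unfolding d_interval_def S_def by blast
    have "is_interval S" using cv is_interval_convex_1 by blast
    then have ix: "\<And>a b x. a \<in> S \<Longrightarrow> b \<in> S \<Longrightarrow> a \<le> x \<Longrightarrow> x \<le> b \<Longrightarrow> x \<in> S"
      unfolding is_interval_1 by blast
    have "x \<in> S" "z \<in> S" using h(1,2) I(1) unfolding S_def by auto
    then have "y \<in> S" using ix h(4,5) by blast
    then show "(y,l)\<in>C" using h(3) I(1) unfolding S_def by blast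
  qed
qed

theorem theorem3:
  fixes d :: nat and P :: "(real \<times> nat) set" and \<C> :: "(real \<times> nat) set set"
  assumes "d \<ge> 1"
    and "P \<subseteq> UNIV \<times> {1..d}"
    and "finite \<C>"
    and "\<C> \<subseteq> C_equiv d P"
  shows "collapsible (2 * d - 1) (nerve \<C> id)"
proof -
  define K where "K = nerve \<C> id"
  define w where "w J = (SOME x. x \<in> \<Inter>J)" for J :: "(real \<times> nat) set set"
  define W where "W = w ` {J \<in> K. J \<noteq> {}}"
  have "K \<subseteq> Pow \<C>" unfolding K_def nerve_def by blast
  then have "finite K" using assms(3) finite_subset by blast
  then have finW: "finite W" unfolding W_def by simp
  define P' where "P' = P \<inter> W"
  define G where "G C = C \<inter> W" for C :: "(real \<times> nat) set"
  have eqn: "nerve \<C> id = nerve \<C> G"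
  proof (rule set_eqI)
    fix J
    show "J \<in> nerve \<C> id \<longleftrightarrow> J \<in> nerve \<C> G"
    proof (cases "J = {}")
      case True
      then show ?thesis unfolding nerve_def by simp
    next
      case False
      show ?thesis
      proof
        assume J: "J \<in> nerve \<C> id"
        then have ne: "\<Inter>J \<noteq> {}" and sub: "J \<subseteq> \<C>" unfolding nerve_def by auto
        have "w J \<in> \<Inter>J" unfolding w_def using ne by (metis equals0I someI_ex)
        moreover have "w J \<in> W" unfolding W_def using J False K_def by blast
        ultimately have "w J \<in> (\<Inter>j\<in>J. G j)" unfolding G_def by blast
        then show "J \<in> nerve \<C> G" using sub unfolding nerve_def by blast
      next
        assume "J \<in> nerve \<C> G"
        then show "J \<in> nerve \<C> id" using False unfolding nerve_def G_def by auto
      qed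
    qed
  qed
  have oc: "\<forall>C\<in>\<C>. ordconv P' (G C)"
  proof
    fix C assume C: "C \<in> \<C>"
    have "ordconv P C" using Cequiv_ordconv[OF assms(2)] C assms(4) by blast
    then have S: "C \<subseteq> P" and c: "\<And>x y z l. (x,l)\<in>C \<Longrightarrow> (z,l)\<in>C \<Longrightarrow> (y,l)\<in>P \<Longrightarrow> x\<le>y \<Longrightarrow> y\<le>z \<Longrightarrow> (y,l)\<in>C"
      by (rule ordconvP, rule ordconvD)
    show "ordconv P' (G C)" unfolding ordconv_def
    proof (intro conjI allI impI)
      show "G C \<subseteq> P'" using S unfolding G_def P'_def by blast
      fix x y z l assume h: "(x,l) \<in> G C" "(z,l) \<in> G C" "(y,l)\<in>P'" "x\<le>y" "y\<le>z"
      have "(y,l) \<in> C" using c[of x l z y] h unfolding G_def P'_def by blast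
      then show "(y,l) \<in> G C" using h(3) unfolding G_def P'_def by blast
    qed
  qed
  have "collapsible (2 * d - 1) (nerve \<C> G)"
  proof (rule comb[OF assms(1) _ _ assms(3) oc])
    show "finite P'" using finW unfolding P'_def by simp
    show "P' \<subseteq> UNIV \<times> {1..d}" using assms(2) unfolding P'_def by blast
  qed
  then show ?thesis using eqn by simp
qed

end
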